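(* Let $n\ge 2$, $N=2n^2$, and let $\hat{\mathbf A}$, $\hat{\mathbf D}$ and $\mathbf Q=\begin{pmatrix}\hat{\mathbf A} & \mathbf 0\\ \mathbf I_N-\hat{\mathbf A} & \hat{\mathbf D}\end{pmatrix}$ be as in the context. For an $N\times N$ matrix $\mathbf T$ and $\epsilon>0$ put $$\mathbf G=\begin{pmatrix}\mathbf 0_{N\times N} & \mathbf T\\ \mathbf 0_{N\times N} & -\mathbf T\end{pmatrix},\qquad \mathbf Q_{\epsilon,\mathbf T}=\mathbf Q+\epsilon\mathbf G .$$ If $\mathbf T=\mathbf I_N-\hat{\mathbf D}$ (or $\mathbf T=\mathbf I_N-\hat{\mathbf D}^{-1}$), then $\mathbf Q_{\epsilon,\mathbf T}$ has exactly three linearly independent right eigenvectors for the eigenvalue $1$, and these are exactly the right eigenvectors of $\mathbf Q$ for the eigenvalue $1$, namely $\begin{pmatrix}\mathbf 1_N\\ \mathbf 0_N\end{pmatrix}$, $\begin{pmatrix}\mathbf 0_N\\ \bar{\mathbf v}^+\end{pmatrix}$, $\begin{pmatrix}\mathbf 0_N\\ \bar{\mathbf v}^-\end{pmatrix}$, where $\bar{\mathbf v}^\pm$ span the eigenspace of $\hat{\mathbf D}$ for the eigenvalue $1$.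
   Context: Notation: $n\ge2$, $N=2n^2$. $\hat{\mathbf A}$ is an $N\times N$ row-stochastic SIA matrix (so $1$ is a simple eigenvalue and all others have modulus $<1$). For $l=1,\dots,n$, $\mathbf D^l$ is an $n\times n$ column-stochastic matrix, and $\hat{\mathbf D}$ is the $N\times N$ matrix partitioned into an $n\times n$ array of $2n\times 2n$ blocks whose $(i,l)$ block equals $\frac1n\,\mathrm{diag}(\mathbf D^l,\mathbf D^l)$ for all $i,l$; it is assumed that $\frac1n\sum_l\mathbf D^l$ has $1$ as a simple eigenvalue, so that the eigenvalue $1$ of $\hat{\mathbf D}$ has a two-dimensional eigenspace spanned by two nonnegative vectors $\bar{\mathbf v}^+$ (supported on the coordinates $j$ with $1\le j \bmod 2n\le n$) and $\bar{\mathbf v}^-$ (supported on the coordinates $j$ with $n+1\le j\bmod 2n\le 2n$, where residue $0$ is read as $2n$). $\mathbf 1_N,\mathbf 0_N$ are the all-ones and zero vectors. *)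

theory Defs
  imports "Jordan_Normal_Form.Matrix" "Jordan_Normal_Form.Char_Poly"
begin

definition row_stochastic :: "nat \<Rightarrow> real mat \<Rightarrow> bool" where
  "row_stochastic m A \<longleftrightarrow> A \<in> carrier_mat m m \<and>
     (\<forall>i<m. \<forall>j<m. A $$ (i,j) \<ge> 0) \<and> (\<forall>i<m. (\<Sum>j<m. A $$ (i,j)) = 1)"

definition col_stochastic :: "nat \<Rightarrow> real mat \<Rightarrow> bool" where
  "col_stochastic m A \<longleftrightarrow> A \<in> carrier_mat m m \<and>
     (\<forall>i<m. \<forall>j<m. A $$ (i,j) \<ge> 0) \<and> (\<forall>j<m. (\<Sum>i<m. A $$ (i,j)) = 1)"

text \<open>SIA (stochastic, indecomposable, aperiodic): row-stochastic and the powers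
  converge to a matrix all of whose rows are equal (i.e. to 1 c^T).\<close>
definition SIA :: "nat \<Rightarrow> real mat \<Rightarrow> bool" where
  "SIA m A \<longleftrightarrow> row_stochastic m A \<and>
     (\<exists>c :: nat \<Rightarrow> real. \<forall>i<m. \<forall>j<m. (\<lambda>k. (A ^\<^sub>m k) $$ (i,j)) \<longlonglongrightarrow> c j)"

text \<open>The N x N matrix D-hat (N = 2n^2): n x n array of 2n x 2n blocks, block (i,l)
  equal to (1/n) diag(D^l, D^l); here l ranges over 0..n-1.\<close>
definition Dhat :: "nat \<Rightarrow> (nat \<Rightarrow> real mat) \<Rightarrow> real mat" where
  "Dhat n Dl = mat (2*n^2) (2*n^2) (\<lambda>(i,j).
     (let l = j div (2*n); r = i mod (2*n); s = j mod (2*n) in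
       if r < n \<and> s < n then Dl l $$ (r, s) / real n
       else if n \<le> r \<and> n \<le> s then Dl l $$ (r - n, s - n) / real n
       else 0))"

definition Dmean :: "nat \<Rightarrow> (nat \<Rightarrow> real mat) \<Rightarrow> real mat" where
  "Dmean n Dl = mat n n (\<lambda>(r,s). (\<Sum>l<n. Dl l $$ (r,s)) / real n)"

definition Qmat :: "nat \<Rightarrow> real mat \<Rightarrow> real mat \<Rightarrow> real mat" where
  "Qmat N A D = four_block_mat A (0\<^sub>m N N) (1\<^sub>m N - A) D"

definition Gmat :: "nat \<Rightarrow> real mat \<Rightarrow> real mat" where
  "Gmat N T = four_block_mat (0\<^sub>m N N) T (0\<^sub>m N N) (- T)"

definition Qeps :: "nat \<Rightarrow> real mat \<Rightarrow> real mat \<Rightarrow> real \<Rightarrow> real mat \<Rightarrow> real mat" where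
  "Qeps N A D \<epsilon> T = Qmat N A D + \<epsilon> \<cdot>\<^sub>m Gmat N T"

definition eig1 :: "nat \<Rightarrow> real mat \<Rightarrow> real vec set" where
  "eig1 m M = {z \<in> carrier_vec m. M *\<^sub>v z = z}"

definition ones_vec :: "nat \<Rightarrow> real vec" where
  "ones_vec m = vec m (\<lambda>_. 1)"

end

theory Submission
  imports Defs
begin

lemma smult_mat_mult_vec': "dim_vec v = dim_col M \<Longrightarrow> (e \<cdot>\<^sub>m (M::real mat)) *\<^sub>v v = e \<cdot>\<^sub>v (M *\<^sub>v v)"
  by (intro eq_vecI) (auto simp: scalar_prod_def sum_distrib_left ac_simps)

lemma zero_mat_mult_vec': "dim_vec v = nc \<Longrightarrow> (0\<^sub>m nr nc :: real mat) *\<^sub>v v = 0\<^sub>v nr"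
  by (intro eq_vecI) (auto simp: scalar_prod_def)

lemma Qmat_mult:
  assumes A: "A \<in> carrier_mat N N" and D: "D \<in> carrier_mat N N"
    and x: "x \<in> carrier_vec N" and y: "y \<in> carrier_vec N"
  shows "Qmat N A D *\<^sub>v (x @\<^sub>v y) = (A *\<^sub>v x) @\<^sub>v (x - A *\<^sub>v x + D *\<^sub>v y)"
proof -
  have "Qmat N A D *\<^sub>v (x @\<^sub>v y) = (A *\<^sub>v x + 0\<^sub>m N N *\<^sub>v y) @\<^sub>v ((1\<^sub>m N - A) *\<^sub>v x + D *\<^sub>v y)"
    unfolding Qmat_def by (rule four_block_mat_mult_vec[OF A _ _ D x y]) (use A in auto)
  also have "(1\<^sub>m N - A) *\<^sub>v x = x - A *\<^sub>v x"
    using A x by (subst minus_mult_distrib_mat_vec[of _ N N]) auto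
  finally show ?thesis using A x y by (simp add: zero_mat_mult_vec')
qed

lemma Qeps_mult:
  assumes A: "A \<in> carrier_mat N N" and D: "D \<in> carrier_mat N N" and T: "T \<in> carrier_mat N N"
    and x: "x \<in> carrier_vec N" and y: "y \<in> carrier_vec N"
  shows "Qeps N A D e T *\<^sub>v (x @\<^sub>v y) = (A *\<^sub>v x + e \<cdot>\<^sub>v (T *\<^sub>v y)) @\<^sub>v (x - A *\<^sub>v x + D *\<^sub>v y - e \<cdot>\<^sub>v (T *\<^sub>v y))"
proof -
  have G: "Gmat N T *\<^sub>v (x @\<^sub>v y) = (0\<^sub>m N N *\<^sub>v x + T *\<^sub>v y) @\<^sub>v (0\<^sub>m N N *\<^sub>v x + (- T) *\<^sub>v y)"
    unfolding Gmat_def by (rule four_block_mat_mult_vec[OF _ T _ _ x y]) (use T in auto)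
  have QC: "Qmat N A D \<in> carrier_mat (N+N) (N+N)" unfolding Qmat_def using A D by auto
  have GC: "Gmat N T \<in> carrier_mat (N+N) (N+N)" unfolding Gmat_def using T by auto
  have xy: "x @\<^sub>v y \<in> carrier_vec (N+N)" using x y by auto
  have GS: "(e \<cdot>\<^sub>m Gmat N T) *\<^sub>v (x @\<^sub>v y) = e \<cdot>\<^sub>v (Gmat N T *\<^sub>v (x @\<^sub>v y))"
    by (rule smult_mat_mult_vec') (use GC x y in auto)
  have "Qeps N A D e T *\<^sub>v (x @\<^sub>v y) = Qmat N A D *\<^sub>v (x @\<^sub>v y) + e \<cdot>\<^sub>v (Gmat N T *\<^sub>v (x @\<^sub>v y))"
    unfolding Qeps_def using QC GC xy
    by (subst add_mult_distrib_mat_vec[of _ "N+N" "N+N"]) (auto simp: GS)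
  also have "\<dots> = (A *\<^sub>v x + e \<cdot>\<^sub>v (T *\<^sub>v y)) @\<^sub>v (x - A *\<^sub>v x + D *\<^sub>v y - e \<cdot>\<^sub>v (T *\<^sub>v y))"
    unfolding Qmat_mult[OF A D x y] G
    by (rule eq_vecI) (use A D T x y in \<open>auto simp: zero_mat_mult_vec'\<close>)
  finally show ?thesis .
qed
lemma eigQ:
  assumes A: "A \<in> carrier_mat N N" and D: "D \<in> carrier_mat N N"
    and x: "x \<in> carrier_vec N" and y: "y \<in> carrier_vec N"
  shows "Qmat N A D *\<^sub>v (x @\<^sub>v y) = x @\<^sub>v y \<longleftrightarrow> A *\<^sub>v x = x \<and> D *\<^sub>v y = y"
proof -
  have "Qmat N A D *\<^sub>v (x @\<^sub>v y) = x @\<^sub>v y \<longleftrightarrow> A *\<^sub>v x = x \<and> x - A *\<^sub>v x + D *\<^sub>v y = y"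
    unfolding Qmat_mult[OF A D x y] by (rule append_vec_eq) (use A x in auto)
  also have "\<dots> \<longleftrightarrow> A *\<^sub>v x = x \<and> D *\<^sub>v y = y"
    using A D x y by (auto simp: vec_eq_iff)
  finally show ?thesis .
qed

lemma eigQeps:
  assumes A: "A \<in> carrier_mat N N" and D: "D \<in> carrier_mat N N" and T: "T \<in> carrier_mat N N"
    and x: "x \<in> carrier_vec N" and y: "y \<in> carrier_vec N"
    and TD: "D *\<^sub>v y = y \<Longrightarrow> T *\<^sub>v y = 0\<^sub>v N"
  shows "Qeps N A D e T *\<^sub>v (x @\<^sub>v y) = x @\<^sub>v y \<longleftrightarrow> A *\<^sub>v x = x \<and> D *\<^sub>v y = y"
proof -
  have "Qeps N A D e T *\<^sub>v (x @\<^sub>v y) = x @\<^sub>v y \<longleftrightarrow>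
     A *\<^sub>v x + e \<cdot>\<^sub>v (T *\<^sub>v y) = x \<and> x - A *\<^sub>v x + D *\<^sub>v y - e \<cdot>\<^sub>v (T *\<^sub>v y) = y"
    unfolding Qeps_mult[OF A D T x y] by (rule append_vec_eq) (use A T y x in auto)
  also have "\<dots> \<longleftrightarrow> A *\<^sub>v x = x \<and> D *\<^sub>v y = y"
  proof
    assume h: "A *\<^sub>v x + e \<cdot>\<^sub>v (T *\<^sub>v y) = x \<and> x - A *\<^sub>v x + D *\<^sub>v y - e \<cdot>\<^sub>v (T *\<^sub>v y) = y"
    have Dy: "D *\<^sub>v y = y"
    proof (rule eq_vecI)
      fix i assume i: "i < dim_vec y"
      have "(A *\<^sub>v x + e \<cdot>\<^sub>v (T *\<^sub>v y)) $ i = x $ i" using h by simp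
      moreover have "(x - A *\<^sub>v x + D *\<^sub>v y - e \<cdot>\<^sub>v (T *\<^sub>v y)) $ i = y $ i" using h by simp
      ultimately show "(D *\<^sub>v y) $ i = y $ i" using i A D T x y by auto
    qed (use D y in auto)
    have Ty: "T *\<^sub>v y = 0\<^sub>v N" using TD Dy .
    have "A *\<^sub>v x = x" using h Ty A x by (auto simp: vec_eq_iff)
    then show "A *\<^sub>v x = x \<and> D *\<^sub>v y = y" using Dy by auto
  next
    assume h: "A *\<^sub>v x = x \<and> D *\<^sub>v y = y"
    then have "T *\<^sub>v y = 0\<^sub>v N" using TD by blast
    then show "A *\<^sub>v x + e \<cdot>\<^sub>v (T *\<^sub>v y) = x \<and> x - A *\<^sub>v x + D *\<^sub>v y - e \<cdot>\<^sub>v (T *\<^sub>v y) = y"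
      using h x y by auto
  qed
  finally show ?thesis .
qed

lemma pow_fix:
  assumes A: "A \<in> carrier_mat m m" and x: "x \<in> carrier_vec m" and Ax: "A *\<^sub>v x = x"
  shows "(A ^\<^sub>m k) *\<^sub>v x = x"
proof (induction k)
  case 0 then show ?case using A x by simp
next
  case (Suc k)
  have "(A ^\<^sub>m Suc k) *\<^sub>v x = (A ^\<^sub>m k) *\<^sub>v (A *\<^sub>v x)"
    using assoc_mult_mat_vec[OF pow_carrier_mat[OF A] A x] by simp
  then show ?case using Suc Ax by simp
qed

lemma SIA_fix:
  assumes S: "SIA m A" and x: "x \<in> carrier_vec m" and Ax: "A *\<^sub>v x = x"
  shows "\<exists>\<alpha>. x = \<alpha> \<cdot>\<^sub>v ones_vec m"
proof -
  from S have A: "A \<in> carrier_mat m m" unfolding SIA_def row_stochastic_def by auto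
  from S obtain c where c: "\<forall>i<m. \<forall>j<m. (\<lambda>k. (A ^\<^sub>m k) $$ (i,j)) \<longlonglongrightarrow> c j"
    unfolding SIA_def by auto
  have xi: "x $ i = (\<Sum>j<m. c j * x $ j)" if i: "i < m" for i
  proof -
    have eq: "(\<lambda>k. (\<Sum>j<m. (A ^\<^sub>m k) $$ (i,j) * x $ j)) = (\<lambda>k. x $ i)"
    proof
      fix k
      have "x $ i = ((A ^\<^sub>m k) *\<^sub>v x) $ i" using pow_fix[OF A x Ax] by simp
      also have "\<dots> = (\<Sum>j<m. (A ^\<^sub>m k) $$ (i,j) * x $ j)"
        using A x i by (simp add: scalar_prod_def row_def lessThan_atLeast0)
      finally show "(\<Sum>j<m. (A ^\<^sub>m k) $$ (i,j) * x $ j) = x $ i" by simp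
    qed
    have "(\<lambda>k. (\<Sum>j<m. (A ^\<^sub>m k) $$ (i,j) * x $ j)) \<longlonglongrightarrow> (\<Sum>j<m. c j * x $ j)"
      by (intro tendsto_sum tendsto_mult_right) (use c i in auto)
    then have "(\<lambda>k. x $ i) \<longlonglongrightarrow> (\<Sum>j<m. c j * x $ j)" unfolding eq .
    then show ?thesis using LIMSEQ_const_iff by blast
  qed
  show ?thesis
    by (rule exI[of _ "\<Sum>j<m. c j * x $ j"]) (use x xi in \<open>auto simp: vec_eq_iff ones_vec_def\<close>)
qed

lemma rs_ones:
  assumes "row_stochastic m A" shows "A *\<^sub>v ones_vec m = ones_vec m"
  using assms unfolding row_stochastic_def ones_vec_def
  by (auto simp: vec_eq_iff scalar_prod_def row_def lessThan_atLeast0)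

lemma comb_eq:
  assumes "vp \<in> carrier_vec N" "vm \<in> carrier_vec N"
  shows "a \<cdot>\<^sub>v (ones_vec N @\<^sub>v 0\<^sub>v N) + b \<cdot>\<^sub>v (0\<^sub>v N @\<^sub>v vp) + c \<cdot>\<^sub>v (0\<^sub>v N @\<^sub>v vm)
    = (a \<cdot>\<^sub>v ones_vec N) @\<^sub>v (b \<cdot>\<^sub>v vp + c \<cdot>\<^sub>v vm)"
  using assms by (auto simp: vec_eq_iff ones_vec_def)

theorem lemma2:
  fixes n :: nat and A T :: "real mat" and Dl :: "nat \<Rightarrow> real mat"
    and vp vm :: "real vec" and \<epsilon> :: real
  defines "N \<equiv> 2 * n^2"
  assumes n2: "n \<ge> 2"
    and A_SIA: "SIA N A"
    and Dl_stoch: "\<forall>l<n. col_stochastic n (Dl l)"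
    and simple: "order 1 (char_poly (Dmean n Dl)) = 1"
    and vp: "vp \<in> carrier_vec N" "vp \<noteq> 0\<^sub>v N" "\<forall>j<N. vp $ j \<ge> 0"
            "\<forall>j<N. \<not> (j mod (2*n) < n) \<longrightarrow> vp $ j = 0"
    and vm: "vm \<in> carrier_vec N" "vm \<noteq> 0\<^sub>v N" "\<forall>j<N. vm $ j \<ge> 0"
            "\<forall>j<N. j mod (2*n) < n \<longrightarrow> vm $ j = 0"
    and span_D: "eig1 N (Dhat n Dl) = {a \<cdot>\<^sub>v vp + b \<cdot>\<^sub>v vm | a b. True}"
    and eps: "\<epsilon> > 0"
    and T: "T = 1\<^sub>m N - Dhat n Dl \<or>
            (\<exists>Dinv \<in> carrier_mat N N. Dhat n Dl * Dinv = 1\<^sub>m N \<and> Dinv * Dhat n Dl = 1\<^sub>m N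
                \<and> T = 1\<^sub>m N - Dinv)"
  shows "eig1 (2*N) (Qeps N A (Dhat n Dl) \<epsilon> T) = eig1 (2*N) (Qmat N A (Dhat n Dl))
       \<and> eig1 (2*N) (Qmat N A (Dhat n Dl)) =
           {a \<cdot>\<^sub>v (ones_vec N @\<^sub>v 0\<^sub>v N) + b \<cdot>\<^sub>v (0\<^sub>v N @\<^sub>v vp) + c \<cdot>\<^sub>v (0\<^sub>v N @\<^sub>v vm) | a b c. True}
       \<and> (\<forall>a b c. a \<cdot>\<^sub>v (ones_vec N @\<^sub>v 0\<^sub>v N) + b \<cdot>\<^sub>v (0\<^sub>v N @\<^sub>v vp) + c \<cdot>\<^sub>v (0\<^sub>v N @\<^sub>v vm)
                  = 0\<^sub>v (2*N) \<longrightarrow> a = 0 \<and> b = 0 \<and> c = 0)"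
proof -
  have Dc: "Dhat n Dl \<in> carrier_mat N N" unfolding Dhat_def N_def by auto
  have Ac: "A \<in> carrier_mat N N" using A_SIA unfolding SIA_def row_stochastic_def by auto
  have TD: "T *\<^sub>v y = 0\<^sub>v N" if y: "y \<in> carrier_vec N" and Dy: "Dhat n Dl *\<^sub>v y = y" for y
    using T
  proof
    assume T1: "T = 1\<^sub>m N - Dhat n Dl"
    show ?thesis unfolding T1 using y Dy Dc
      by (subst minus_mult_distrib_mat_vec[of _ N N]) auto
  next
    assume "\<exists>Dinv \<in> carrier_mat N N. Dhat n Dl * Dinv = 1\<^sub>m N \<and> Dinv * Dhat n Dl = 1\<^sub>m N
                \<and> T = 1\<^sub>m N - Dinv"
    then obtain Dinv where Di: "Dinv \<in> carrier_mat N N" "Dinv * Dhat n Dl = 1\<^sub>m N"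
      and T2: "T = 1\<^sub>m N - Dinv" by blast
    have "Dinv *\<^sub>v y = Dinv *\<^sub>v (Dhat n Dl *\<^sub>v y)" using Dy by simp
    also have "\<dots> = (Dinv * Dhat n Dl) *\<^sub>v y" using assoc_mult_mat_vec[OF Di(1) Dc y] by simp
    also have "\<dots> = y" using Di y by simp
    finally have "Dinv *\<^sub>v y = y" .
    then show ?thesis unfolding T2 using y Di
      by (subst minus_mult_distrib_mat_vec[of _ N N]) auto
  qed
  have Tc: "T \<in> carrier_mat N N" using T Dc by auto
  have splt: "z = vec_first z N @\<^sub>v vec_last z N" if "z \<in> carrier_vec (2*N)" for z
    using vec_first_last_append[of z N N] that by (simp add: mult_2)
  have C1: "eig1 (2*N) (Qeps N A (Dhat n Dl) \<epsilon> T) = eig1 (2*N) (Qmat N A (Dhat n Dl))"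
  proof (intro equalityI subsetI)
    fix z assume z: "z \<in> eig1 (2*N) (Qeps N A (Dhat n Dl) \<epsilon> T)"
    then have zc: "z \<in> carrier_vec (2*N)" unfolding eig1_def by auto
    have "Qeps N A (Dhat n Dl) \<epsilon> T *\<^sub>v (vec_first z N @\<^sub>v vec_last z N) = vec_first z N @\<^sub>v vec_last z N"
      using z splt[OF zc] unfolding eig1_def by auto
    then have "Qmat N A (Dhat n Dl) *\<^sub>v (vec_first z N @\<^sub>v vec_last z N) = vec_first z N @\<^sub>v vec_last z N"
      using eigQeps[OF Ac Dc Tc, of "vec_first z N" "vec_last z N" \<epsilon>] TD eigQ[OF Ac Dc, of "vec_first z N" "vec_last z N"]
      by auto
    then show "z \<in> eig1 (2*N) (Qmat N A (Dhat n Dl))" using zc splt[OF zc] unfolding eig1_def by auto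
  next
    fix z assume z: "z \<in> eig1 (2*N) (Qmat N A (Dhat n Dl))"
    then have zc: "z \<in> carrier_vec (2*N)" unfolding eig1_def by auto
    have "Qmat N A (Dhat n Dl) *\<^sub>v (vec_first z N @\<^sub>v vec_last z N) = vec_first z N @\<^sub>v vec_last z N"
      using z splt[OF zc] unfolding eig1_def by auto
    then have "Qeps N A (Dhat n Dl) \<epsilon> T *\<^sub>v (vec_first z N @\<^sub>v vec_last z N) = vec_first z N @\<^sub>v vec_last z N"
      using eigQeps[OF Ac Dc Tc, of "vec_first z N" "vec_last z N" \<epsilon>] TD eigQ[OF Ac Dc, of "vec_first z N" "vec_last z N"]
      by auto
    then show "z \<in> eig1 (2*N) (Qeps N A (Dhat n Dl) \<epsilon> T)" using zc splt[OF zc] unfolding eig1_def by auto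
  qed
  have C2: "eig1 (2*N) (Qmat N A (Dhat n Dl)) =
           {a \<cdot>\<^sub>v (ones_vec N @\<^sub>v 0\<^sub>v N) + b \<cdot>\<^sub>v (0\<^sub>v N @\<^sub>v vp) + c \<cdot>\<^sub>v (0\<^sub>v N @\<^sub>v vm) | a b c. True}"
  proof (intro equalityI subsetI)
    fix z assume z: "z \<in> eig1 (2*N) (Qmat N A (Dhat n Dl))"
    then have zc: "z \<in> carrier_vec (2*N)" unfolding eig1_def by auto
    have "Qmat N A (Dhat n Dl) *\<^sub>v (vec_first z N @\<^sub>v vec_last z N) = vec_first z N @\<^sub>v vec_last z N"
      using z splt[OF zc] unfolding eig1_def by auto
    then have Ax: "A *\<^sub>v vec_first z N = vec_first z N" and Dy: "Dhat n Dl *\<^sub>v vec_last z N = vec_last z N"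
      using eigQ[OF Ac Dc, of "vec_first z N" "vec_last z N"] by auto
    obtain \<alpha> where al: "vec_first z N = \<alpha> \<cdot>\<^sub>v ones_vec N" using SIA_fix[OF A_SIA _ Ax] by auto
    have "vec_last z N \<in> eig1 N (Dhat n Dl)" using Dy unfolding eig1_def by auto
    then obtain b c where bc: "vec_last z N = b \<cdot>\<^sub>v vp + c \<cdot>\<^sub>v vm" using span_D by auto
    have "z = \<alpha> \<cdot>\<^sub>v (ones_vec N @\<^sub>v 0\<^sub>v N) + b \<cdot>\<^sub>v (0\<^sub>v N @\<^sub>v vp) + c \<cdot>\<^sub>v (0\<^sub>v N @\<^sub>v vm)"
      unfolding comb_eq[OF vp(1) vm(1)] using splt[OF zc] al bc by simp
    then show "z \<in> {a \<cdot>\<^sub>v (ones_vec N @\<^sub>v 0\<^sub>v N) + b \<cdot>\<^sub>v (0\<^sub>v N @\<^sub>v vp) + c \<cdot>\<^sub>v (0\<^sub>v N @\<^sub>v vm) | a b c. True}"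
      by blast
  next
    fix z assume "z \<in> {a \<cdot>\<^sub>v (ones_vec N @\<^sub>v 0\<^sub>v N) + b \<cdot>\<^sub>v (0\<^sub>v N @\<^sub>v vp) + c \<cdot>\<^sub>v (0\<^sub>v N @\<^sub>v vm) | a b c. True}"
    then obtain a b c where zd: "z = (a \<cdot>\<^sub>v ones_vec N) @\<^sub>v (b \<cdot>\<^sub>v vp + c \<cdot>\<^sub>v vm)"
      using comb_eq[OF vp(1) vm(1)] by auto
    have oc: "ones_vec N \<in> carrier_vec N" unfolding ones_vec_def by auto
    have "b \<cdot>\<^sub>v vp + c \<cdot>\<^sub>v vm \<in> eig1 N (Dhat n Dl)" using span_D by auto
    then have Dy: "Dhat n Dl *\<^sub>v (b \<cdot>\<^sub>v vp + c \<cdot>\<^sub>v vm) = b \<cdot>\<^sub>v vp + c \<cdot>\<^sub>v vm"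
      unfolding eig1_def by auto
    have Ax: "A *\<^sub>v (a \<cdot>\<^sub>v ones_vec N) = a \<cdot>\<^sub>v ones_vec N"
      using mult_mat_vec[OF Ac oc] rs_ones A_SIA unfolding SIA_def by auto
    have "Qmat N A (Dhat n Dl) *\<^sub>v z = z"
      unfolding zd using eigQ[OF Ac Dc, of "a \<cdot>\<^sub>v ones_vec N" "b \<cdot>\<^sub>v vp + c \<cdot>\<^sub>v vm"] Ax Dy oc vp(1) vm(1)
      by auto
    moreover have "z \<in> carrier_vec (2*N)" unfolding zd using oc vp(1) vm(1) by (auto simp: mult_2)
    ultimately show "z \<in> eig1 (2*N) (Qmat N A (Dhat n Dl))" unfolding eig1_def by auto
  qed
  have C3: "\<forall>a b c. a \<cdot>\<^sub>v (ones_vec N @\<^sub>v 0\<^sub>v N) + b \<cdot>\<^sub>v (0\<^sub>v N @\<^sub>v vp) + c \<cdot>\<^sub>v (0\<^sub>v N @\<^sub>v vm)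
                  = 0\<^sub>v (2*N) \<longrightarrow> a = 0 \<and> b = 0 \<and> c = 0"
  proof (intro allI impI)
    fix a b c
    assume h0: "a \<cdot>\<^sub>v (ones_vec N @\<^sub>v 0\<^sub>v N) + b \<cdot>\<^sub>v (0\<^sub>v N @\<^sub>v vp) + c \<cdot>\<^sub>v (0\<^sub>v N @\<^sub>v vm) = 0\<^sub>v (2*N)"
    then have h: "(a \<cdot>\<^sub>v ones_vec N) @\<^sub>v (b \<cdot>\<^sub>v vp + c \<cdot>\<^sub>v vm) = 0\<^sub>v (2*N)"
      using comb_eq[OF vp(1) vm(1)] by simp
    have Np: "0 < N" unfolding N_def using n2 by simp
    have ix: "((a \<cdot>\<^sub>v ones_vec N) @\<^sub>v (b \<cdot>\<^sub>v vp + c \<cdot>\<^sub>v vm)) $ i = 0" if "i < 2*N" for i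
      using h that by simp
    have a0: "a = 0" using ix[of 0] Np vp(1) vm(1) by (simp add: ones_vec_def)
    have iy: "b * vp $ j + c * vm $ j = 0" if j: "j < N" for j
      using ix[of "N + j"] j vp(1) vm(1) by (simp add: ones_vec_def)
    obtain j where j: "j < N" "vp $ j \<noteq> 0" using vp(1,2) by (auto simp: vec_eq_iff)
    have "vm $ j = 0" using vp(4) vm(4) j by metis
    then have b0: "b = 0" using iy[OF j(1)] j by simp
    obtain k where k: "k < N" "vm $ k \<noteq> 0" using vm(1,2) by (auto simp: vec_eq_iff)
    have "vp $ k = 0" using vp(4) vm(4) k by metis
    then have c0: "c = 0" using iy[OF k(1)] k by simp
    show "a = 0 \<and> b = 0 \<and> c = 0" using a0 b0 c0 by simp
  qed
  show ?thesis using C1 C2 C3 by blast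
qed

end
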